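(* Let $n\ge 2$ and let $E_1,\dots,E_n,H_1,\dots,H_n$ be logically independent events with $H_i\neq\emptyset$ for all $i$. Let $\mathcal F=\{E_1|H_1,\dots,E_n|H_n,\mathscr C_{1\cdots n}\}$ and let $\mathcal M=(x_1,\dots,x_n,x_{1\cdots n})\in\mathbb R^{n+1}$ be a prevision assessment on $\mathcal F$ (with $x_i=P(E_i|H_i)$, $x_{1\cdots n}=\mathbb P(\mathscr C_{1\cdots n})$). Let $\mathcal I^*\subseteq\mathbb R^{n+1}$ be the convex hull of the $2^n$ points $(q_1,\dots,q_n,q_1q_2\cdots q_n)$ with $(q_1,\dots,q_n)\in\{0,1\}^n$. If $\mathcal M\in\mathcal I^*$, then $\mathcal M$ is coherent.
   Context: Events are identified with their indicators; $\bar E$ is the negation of $E$ and $EH$ the conjunction. For events $E,H$ with $H\neq\emptyset$, the conditional event $E|H$ is true if $EH$ is true, false if $\bar EH$ is true, void if $\bar H$ is true; once $P(E|H)=x$ is assessed, $E|H$ is identified with the random quantity $EH+x\bar H$. More generally a finite conditional random quantity $X|H$ with assessed prevision $\mu=\mathbb P(X|H)$ is identified with $XH+\mu\bar H$. Coherence (de Finetti): a prevision assessment $(\mu_1,\dots,\mu_m)$ on a family $\{X_1|H_1,\dots,X_m|H_m\}$ is coherent iff for every choice of real stakes $s_1,\dots,s_m$ the random gain $G=\sum_{i}s_iH_i(X_i-\mu_i)$, restricted to the values it can take when $H_1\vee\dots\vee H_m$ is true, satisfies $\min G\le 0\le\max G$ (and the same holds for every subfamily). Events $E_1,\dots,E_n,H_1,\dots,H_n$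 are logically independent if all $2^{2n}$ conjunctions of these events or their negations are nonempty. Conjunction of $n$ conditional events: for every nonempty $S\subseteq\{1,\dots,n\}$ let $x_S$ be a prevision value assigned to $\mathscr C_S=\bigwedge_{i\in S}(E_i|H_i)$ (defined recursively, $\mathscr C_{\{i\}}=E_i|H_i$, $x_{\{i\}}=x_i$). Then $\mathscr C_{1\cdots n}$ is the random quantity equal to $1$ if $\bigwedge_{i=1}^nE_iH_i$ is true; $0$ if $\bigvee_{i=1}^n\bar E_iH_i$ is true; $x_S$ if $(\bigwedge_{i\in S}\bar H_i)\wedge(\bigwedge_{i\notin S}E_iH_i)$ is true, for each nonempty strict subset $S$; and $x_{1\cdots n}=\mathbb P(\mathscr C_{1\cdots n})$ if $\bigwedge_{i=1}^n\bar H_i$ is true. The values $x_S$ of the strict sub-conjunctions are fixed (coherently assessed) beforehand; the statement concerns the assessment on $\mathcal F$. *)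

theory Defs
  imports "HOL-Analysis.Analysis"
begin

definition ind :: "'w set \<Rightarrow> 'w \<Rightarrow> real" where
  "ind A w = (if w \<in> A then 1 else 0)"

definition log_indep :: "nat \<Rightarrow> (nat \<Rightarrow> 'w set) \<Rightarrow> (nat \<Rightarrow> 'w set) \<Rightarrow> bool" where
  "log_indep n E H \<longleftrightarrow>
     (\<forall>a b :: nat \<Rightarrow> bool.
        (\<Inter>i\<in>{1..n}. (if a i then E i else - E i) \<inter> (if b i then H i else - H i)) \<noteq> {})"

text \<open>Value at outcome w of the conjunction of E_i|H_i, i in S, where x T is the prevision
  value assigned to the sub-conjunction indexed by T (with x {i} = P(E_i|H_i)).\<close>
definition conj_rq :: "(nat \<Rightarrow> 'w set) \<Rightarrow> (nat \<Rightarrow> 'w set) \<Rightarrow> (nat set \<Rightarrow> real)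
    \<Rightarrow> nat set \<Rightarrow> 'w \<Rightarrow> real" where
  "conj_rq E H x S w =
     (if \<forall>i\<in>S. w \<in> E i \<inter> H i then 1
      else if \<exists>i\<in>S. w \<in> H i - E i then 0
      else x {i\<in>S. w \<notin> H i})"

definition coherent :: "'k set \<Rightarrow> ('k \<Rightarrow> 'w \<Rightarrow> real) \<Rightarrow> ('k \<Rightarrow> 'w set) \<Rightarrow> ('k \<Rightarrow> real) \<Rightarrow> bool" where
  "coherent K X Hc mu \<longleftrightarrow>
     (\<forall>J. J \<subseteq> K \<longrightarrow> J \<noteq> {} \<longrightarrow> (\<forall>s :: 'k \<Rightarrow> real.
        let G = (\<lambda>w. \<Sum>j\<in>J. s j * ind (Hc j) w * (X j w - mu j)) in
        (\<exists>w\<in>(\<Union>j\<in>J. Hc j). G w \<le> 0) \<and> (\<exists>w\<in>(\<Union>j\<in>J. Hc j). G w \<ge> 0)))"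

text \<open>The family {E_i|H_i : i in S} \<union> {C_S}, indexed by S (for the conditional events) and
  index 0 (for the conjunction C_S, whose conditioning event is the disjunction of the H_i).\<close>
definition famX :: "(nat \<Rightarrow> 'w set) \<Rightarrow> (nat \<Rightarrow> 'w set) \<Rightarrow> (nat set \<Rightarrow> real) \<Rightarrow> nat set
    \<Rightarrow> nat \<Rightarrow> 'w \<Rightarrow> real" where
  "famX E H x S k = (if k = 0 then conj_rq E H x S else ind (E k))"

definition famH :: "(nat \<Rightarrow> 'w set) \<Rightarrow> nat set \<Rightarrow> nat \<Rightarrow> 'w set" where
  "famH H S k = (if k = 0 then (\<Union>i\<in>S. H i) else H k)"

definition famMu :: "(nat set \<Rightarrow> real) \<Rightarrow> nat set \<Rightarrow> nat \<Rightarrow> real" where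
  "famMu x S k = (if k = 0 then x S else x {k})"

definition conj_assessment_coherent ::
  "(nat \<Rightarrow> 'w set) \<Rightarrow> (nat \<Rightarrow> 'w set) \<Rightarrow> (nat set \<Rightarrow> real) \<Rightarrow> nat set \<Rightarrow> bool" where
  "conj_assessment_coherent E H x S \<longleftrightarrow>
     coherent (insert 0 S) (famX E H x S) (famH H S) (famMu x S)"

text \<open>Membership of (m_1,..,m_n,m_0) (coordinates 1..n and 0) in the convex hull I* of the
  points (q_1,..,q_n, q_1*...*q_n), q in {0,1}^n: a convex combination of these finitely
  many points (literal unfolding of the convex hull of a finite set).\<close>
definition in_Istar :: "nat \<Rightarrow> (nat \<Rightarrow> real) \<Rightarrow> bool" where
  "in_Istar n m \<longleftrightarrow>
     (\<exists>lam :: (nat \<Rightarrow> real) \<Rightarrow> real.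
        (\<forall>q\<in>{1..n} \<rightarrow>\<^sub>E {0,1}. lam q \<ge> 0) \<and>
        (\<Sum>q\<in>{1..n} \<rightarrow>\<^sub>E {0,1}. lam q) = 1 \<and>
        (\<forall>i\<in>{1..n}. (\<Sum>q\<in>{1..n} \<rightarrow>\<^sub>E {0,1}. lam q * q i) = m i) \<and>
        (\<Sum>q\<in>{1..n} \<rightarrow>\<^sub>E {0,1}. lam q * (\<Prod>i\<in>{1..n}. q i)) = m 0)"

end

theory Submission
  imports Defs
begin

theorem theorem9:
  fixes n :: nat and E H :: "nat \<Rightarrow> 'w set" and x :: "nat set \<Rightarrow> real"
  assumes "n \<ge> 2"
    and "log_indep n E H"
    and "\<forall>i\<in>{1..n}. H i \<noteq> {}"
    and "\<forall>S. S \<subseteq> {1..n} \<longrightarrow> card S \<ge> 2 \<longrightarrow> S \<noteq> {1..n} \<longrightarrow>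
           conj_assessment_coherent E H x S"
    and "in_Istar n (\<lambda>k. if k = 0 then x {1..n} else x {k})"
  shows "conj_assessment_coherent E H x {1..n}"
proof -
  define P where "P = ({1..n} \<rightarrow>\<^sub>E {0::real,1})"
  have finP: "finite P" unfolding P_def by (intro finite_PiE) auto
  define m where "m = (\<lambda>k. if k = 0 then x {1..n} else x {k})"
  obtain lam where lam0: "\<forall>q\<in>P. lam q \<ge> 0" and lam1: "(\<Sum>q\<in>P. lam q) = 1"
    and lami: "\<forall>i\<in>{1..n}. (\<Sum>q\<in>P. lam q * q i) = m i"
    and lamp: "(\<Sum>q\<in>P. lam q * (\<Prod>i\<in>{1..n}. q i)) = m 0"
  proof -
    have "\<exists>lam. (\<forall>q\<in>P. lam q \<ge> 0) \<and> (\<Sum>q\<in>P. lam q) = 1 \<and>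
        (\<forall>i\<in>{1..n}. (\<Sum>q\<in>P. lam q * q i) = m i) \<and>
        (\<Sum>q\<in>P. lam q * (\<Prod>i\<in>{1..n}. q i)) = m 0"
      using assms(5) unfolding in_Istar_def P_def m_def by simp
    then show ?thesis using that by (elim exE conjE) assumption
  qed
  define wit where "wit q = (SOME w. w \<in> (\<Inter>i\<in>{1..n}. (if q i = 1 then E i else - E i) \<inter> H i))" for q :: "nat \<Rightarrow> real"
  have witp: "wit q \<in> (\<Inter>i\<in>{1..n}. (if q i = 1 then E i else - E i) \<inter> H i)" for q
  proof -
    have L: "(\<Inter>i\<in>{1..n}. (if a i then E i else - E i) \<inter> (if b i then H i else - H i)) \<noteq> {}" for a b
      using assms(2) unfolding log_indep_def by blast
    have "(\<Inter>i\<in>{1..n}. (if q i = 1 then E i else - E i) \<inter> H i) \<noteq> {}"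
      using L[of "\<lambda>i. q i = 1" "\<lambda>i. True"] by (simp only: if_True not_False_eq_True)
    then have "\<exists>w. w \<in> (\<Inter>i\<in>{1..n}. (if q i = 1 then E i else - E i) \<inter> H i)"
      by (simp only: ex_in_conv not_False_eq_True)
    then show ?thesis unfolding wit_def by (rule someI_ex)
  qed
  have witE: "wit q \<in> E i \<longleftrightarrow> q i = 1" if "i \<in> {1..n}" for q i
    using witp[of q] that by (auto split: if_splits)
  have witH: "wit q \<in> H i" if "i \<in> {1..n}" for q i
    using witp[of q] that by auto
  have n1: "1 \<in> {1..n}" using assms(1) by auto
  have Xval: "famX E H x {1..n} j (wit q) = (if j = 0 then (\<Prod>i\<in>{1..n}. q i) else q j)"
    if q: "q \<in> P" and j: "j \<in> insert 0 {1..n}" for q j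
  proof (cases "j = 0")
    case True
    show ?thesis
    proof (cases "\<forall>i\<in>{1..n}. q i = 1")
      case True
      then show ?thesis using \<open>j = 0\<close> witE witH
        by (simp add: famX_def conj_rq_def)
    next
      case False
      then obtain i where i: "i \<in> {1..n}" "q i \<noteq> 1" by auto
      then have "q i = 0" using q unfolding P_def by (auto simp: PiE_def Pi_def)
      then have "(\<Prod>i\<in>{1..n}. q i) = 0" using i by (metis finite_atLeastAtMost prod_zero_iff)
      moreover have "conj_rq E H x {1..n} (wit q) = 0"
      proof -
        have a: "\<not> (\<forall>i\<in>{1..n}. wit q \<in> E i \<inter> H i)" using i witE by auto
        have b: "\<exists>i\<in>{1..n}. wit q \<in> H i - E i" using i witE witH by auto
        show ?thesis unfolding conj_rq_def using a b by (simp only: if_False if_True)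
      qed
      ultimately show ?thesis using \<open>j = 0\<close> by (simp add: famX_def)
    qed
  next
    case False
    then have "j \<in> {1..n}" using j by auto
    moreover have "q j \<in> {0,1}" using q \<open>j \<in> {1..n}\<close> unfolding P_def by auto
    ultimately show ?thesis using False witE[of j q]
      by (auto simp: famX_def ind_def)
  qed
  have Hval: "wit q \<in> famH H {1..n} j" if "j \<in> insert 0 {1..n}" for q j
    using that witH n1 by (auto simp: famH_def)
  have Mval: "(\<Sum>q\<in>P. lam q * famX E H x {1..n} j (wit q)) = famMu x {1..n} j"
    if j: "j \<in> insert 0 {1..n}" for j
  proof -
    have "(\<Sum>q\<in>P. lam q * famX E H x {1..n} j (wit q)) =
          (\<Sum>q\<in>P. lam q * (if j = 0 then (\<Prod>i\<in>{1..n}. q i) else q j))"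
      using Xval j by (intro sum.cong) auto
    also have "\<dots> = m j" using lami lamp j by (cases "j = 0") auto
    finally show ?thesis by (simp add: m_def famMu_def)
  qed
  show ?thesis
    unfolding conj_assessment_coherent_def coherent_def Let_def
  proof (intro allI impI)
    fix J s assume J: "J \<subseteq> insert 0 {1..n}" "J \<noteq> {}"
    define G where "G w = (\<Sum>j\<in>J. s j * ind (famH H {1..n} j) w *
        (famX E H x {1..n} j w - famMu x {1..n} j))" for w
    have finJ: "finite J" using J(1) finite_subset by blast
    have Gw: "G (wit q) = (\<Sum>j\<in>J. s j * (famX E H x {1..n} j (wit q) - famMu x {1..n} j))" for q
      unfolding G_def using J(1) Hval by (intro sum.cong) (auto simp: ind_def)
    have inU: "wit q \<in> (\<Union>j\<in>J. famH H {1..n} j)" for q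
      using J Hval by blast
    have S0: "(\<Sum>q\<in>P. lam q * G (wit q)) = 0"
    proof -
      have "(\<Sum>q\<in>P. lam q * G (wit q)) =
            (\<Sum>q\<in>P. \<Sum>j\<in>J. lam q * (s j * (famX E H x {1..n} j (wit q) - famMu x {1..n} j)))"
        unfolding Gw by (simp add: sum_distrib_left)
      also have "\<dots> = (\<Sum>j\<in>J. \<Sum>q\<in>P. lam q * (s j * (famX E H x {1..n} j (wit q) - famMu x {1..n} j)))"
        by (rule sum.swap)
      also have "\<dots> = (\<Sum>j\<in>J. s j * ((\<Sum>q\<in>P. lam q * famX E H x {1..n} j (wit q)) - (\<Sum>q\<in>P. lam q) * famMu x {1..n} j))"
      proof (rule sum.cong[OF refl])
        fix j
        have "(\<Sum>q\<in>P. lam q * (s j * (famX E H x {1..n} j (wit q) - famMu x {1..n} j)))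
          = (\<Sum>q\<in>P. s j * (lam q * famX E H x {1..n} j (wit q)) - s j * (lam q * famMu x {1..n} j))"
          by (rule sum.cong[OF refl]) (simp add: algebra_simps)
        also have "\<dots> = s j * (\<Sum>q\<in>P. lam q * famX E H x {1..n} j (wit q)) - s j * ((\<Sum>q\<in>P. lam q) * famMu x {1..n} j)"
          by (simp add: sum_subtractf sum_distrib_left sum_distrib_right)
        finally show "(\<Sum>q\<in>P. lam q * (s j * (famX E H x {1..n} j (wit q) - famMu x {1..n} j))) = s j * ((\<Sum>q\<in>P. lam q * famX E H x {1..n} j (wit q)) - (\<Sum>q\<in>P. lam q) * famMu x {1..n} j)"
          by (simp add: right_diff_distrib)
      qed
      also have "\<dots> = 0" using Mval J(1) lam1 by (intro sum.neutral) auto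
      finally show ?thesis .
    qed
    have pos: "\<exists>q\<in>P. lam q > 0"
    proof (rule ccontr)
      assume "\<not> ?thesis"
      then have "\<forall>q\<in>P. lam q = 0" using lam0 by force
      then have "(\<Sum>q\<in>P. lam q) = 0" by simp
      then show False using lam1 by simp
    qed
    have le: "\<exists>w\<in>(\<Union>j\<in>J. famH H {1..n} j). G w \<le> 0"
    proof (rule ccontr)
      assume "\<not> ?thesis"
      then have gt: "\<forall>q. G (wit q) > 0" using inU by (metis not_le)
      obtain q where q: "q \<in> P" "lam q > 0" using pos by blast
      have "lam q * G (wit q) \<le> (\<Sum>q\<in>P. lam q * G (wit q))"
        by (rule member_le_sum[OF q(1) _ finP]) (use lam0 gt in \<open>auto intro: mult_nonneg_nonneg less_imp_le\<close>)
      moreover have "lam q * G (wit q) > 0" using q gt by simp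
      ultimately show False using S0 by simp
    qed
    have ge: "\<exists>w\<in>(\<Union>j\<in>J. famH H {1..n} j). G w \<ge> 0"
    proof (rule ccontr)
      assume "\<not> ?thesis"
      then have gt: "\<forall>q. G (wit q) < 0" using inU by (metis not_le)
      obtain q where q: "q \<in> P" "lam q > 0" using pos by blast
      have "- (lam q * G (wit q)) \<le> (\<Sum>q\<in>P. - (lam q * G (wit q)))"
        by (rule member_le_sum[OF q(1) _ finP]) (use lam0 gt in \<open>auto intro: mult_nonneg_nonpos less_imp_le\<close>)
      then have "(\<Sum>q\<in>P. lam q * G (wit q)) \<le> lam q * G (wit q)" by (simp add: sum_negf)
      moreover have "lam q * G (wit q) < 0" using q gt by (simp add: mult_pos_neg)
      ultimately show False using S0 by simp
    qed
    show "(\<exists>w\<in>(\<Union>j\<in>J. famH H {1..n} j). (\<Sum>j\<in>J. s j * ind (famH H {1..n} j) w *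
        (famX E H x {1..n} j w - famMu x {1..n} j)) \<le> 0) \<and>
      (\<exists>w\<in>(\<Union>j\<in>J. famH H {1..n} j). 0 \<le> (\<Sum>j\<in>J. s j * ind (famH H {1..n} j) w *
        (famX E H x {1..n} j w - famMu x {1..n} j)))"
      using le ge unfolding G_def by blast
  qed
qed

end
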